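(* Let $\alpha,\beta$ be positive integers, let $a>0$ and $b$ be real numbers, and for each non-negative integer $n$ let $$S_n=\{n\alpha+j\beta : j\in\mathbb{Z}_{\geq0},\ j>an+b\}\subset\mathbb{Z}.$$ Let $g'=\gcd(\alpha,\beta)$ and $B_0=\beta^2(\alpha+a(1+\beta))+\beta$. Then for every $B\geq B_0$, every non-negative integer $n$, and every multiple $M$ of $g'$ with $M\geq\min(S_n)+B$, there is an integer $i$ with $n\leq i<n+\beta(\beta+1)$ such that $M\in S_i$. *)

theory Defs
  imports Complex_Main
begin

definition Sset :: "nat \<Rightarrow> nat \<Rightarrow> real \<Rightarrow> real \<Rightarrow> nat \<Rightarrow> int set" where
  "Sset \<alpha> \<beta> a b n = {int n * int \<alpha> + int j * int \<beta> | j::nat. real j > a * real n + b}"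

end

theory Submission
  imports Defs
begin

theorem mainTheorem18:
  fixes \<alpha> \<beta> :: nat and a b B :: real and n :: nat and M :: int
  assumes "\<alpha> > 0" "\<beta> > 0" "a > 0"
    and "B \<ge> real \<beta> ^ 2 * (real \<alpha> + a * (1 + real \<beta>)) + real \<beta>"
    and "int (gcd \<alpha> \<beta>) dvd M"
    and "real_of_int M \<ge> real_of_int (Inf (Sset \<alpha> \<beta> a b n)) + B"
  shows "\<exists>i::nat. n \<le> i \<and> i < n + \<beta> * (\<beta> + 1) \<and> M \<in> Sset \<alpha> \<beta> a b i"
proof -
  have exj: "\<exists>j::nat. real j > a * real n + b" by (rule reals_Archimedean2)
  define j0 where "j0 = (LEAST j::nat. real j > a * real n + b)"
  have j0: "real j0 > a * real n + b" unfolding j0_def by (rule LeastI_ex[OF exj])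
  have j0le: "\<And>j::nat. real j > a * real n + b \<Longrightarrow> j0 \<le> j" unfolding j0_def by (rule Least_le)
  have ne: "Sset \<alpha> \<beta> a b n \<noteq> {}" unfolding Sset_def using j0 by blast
  have InfS: "int n * int \<alpha> + int j0 * int \<beta> \<le> Inf (Sset \<alpha> \<beta> a b n)"
  proof (rule cInf_greatest[OF ne])
    fix y assume "y \<in> Sset \<alpha> \<beta> a b n"
    then obtain j::nat where y: "y = int n * int \<alpha> + int j * int \<beta>" "real j > a * real n + b"
      unfolding Sset_def by blast
    have "j0 \<le> j" using j0le y(2) by blast
    then show "int n * int \<alpha> + int j0 * int \<beta> \<le> y" using y(1) by (simp add: mult_right_mono)
  qed
  define g where "g = gcd (int \<alpha>) (int \<beta>)"
  have gpos: "g > 0" using assms(2) by (simp add: g_def)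
  have gM: "g dvd M" using assms(5) by (simp add: g_def)
  obtain u v where uv: "u * int \<alpha> + v * int \<beta> = g" using bezout_int by (metis g_def)
  obtain c where c: "M = g * c" using gM by blast
  define x where "x = u * c"
  define y where "y = v * c"
  have xy: "x * int \<alpha> + y * int \<beta> = M" unfolding x_def y_def c uv[symmetric] by (simp add: algebra_simps)
  obtain \<beta>' where b': "int \<beta> = g * \<beta>'" unfolding g_def by (meson gcd_dvd2 dvdE)
  obtain \<alpha>' where a': "int \<alpha> = g * \<alpha>'" unfolding g_def by (meson gcd_dvd1 dvdE)
  have b'pos: "\<beta>' > 0" using b' gpos assms(2) by (metis of_nat_0_less_iff zero_less_mult_pos)
  have b'le: "\<beta>' \<le> int \<beta>"
  proof -
    have "1 * \<beta>' \<le> g * \<beta>'" using gpos b'pos by (intro mult_right_mono) auto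
    then show ?thesis using b' by simp
  qed
  define t where "t = (x - int n) mod \<beta>'"
  have t0: "0 \<le> t" "t < \<beta>'" unfolding t_def using b'pos by auto
  have tb: "t \<le> int \<beta> - 1" using t0 b'le by linarith
  define i where "i = n + nat t"
  have ii: "int i = int n + t" unfolding i_def using t0 by simp
  have "\<beta>' dvd (x - int i)" unfolding ii t_def
  proof -
    have eq: "x - (int n + (x - int n) mod \<beta>') = (x - int n) - (x - int n) mod \<beta>'" by simp
    show "\<beta>' dvd x - (int n + (x - int n) mod \<beta>')" unfolding eq by (rule dvd_minus_mod)
  qed
  then obtain k where k: "x - int i = \<beta>' * k" by blast
  define q where "q = y + k * \<alpha>'"
  have Mq: "M = int i * int \<alpha> + q * int \<beta>"
  proof -
    have "M = int i * int \<alpha> + (x - int i) * int \<alpha> + y * int \<beta>" using xy by (simp add: algebra_simps)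
    also have "(x - int i) * int \<alpha> = k * \<alpha>' * int \<beta>" unfolding k a' b' by (simp add: algebra_simps)
    finally show ?thesis unfolding q_def by (simp add: algebra_simps)
  qed
  have tr: "real_of_int t \<le> real \<beta> - 1" using tb by linarith
  have t0r: "0 \<le> real_of_int t" using t0 by simp
  have Mr: "real_of_int M = real i * real \<alpha> + real_of_int q * real \<beta>"
    using arg_cong[OF Mq, of real_of_int] by simp
  have ir: "real i = real n + real_of_int t" using arg_cong[OF ii, of real_of_int] by simp
  have Infr: "real n * real \<alpha> + real j0 * real \<beta> \<le> real_of_int (Inf (Sset \<alpha> \<beta> a b n))"
  proof -
    have "real_of_int (int n * int \<alpha> + int j0 * int \<beta>) \<le> real_of_int (Inf (Sset \<alpha> \<beta> a b n))"
      using InfS by (simp only: of_int_le_iff)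
    then show ?thesis by simp
  qed
  have key: "real_of_int q * real \<beta> \<ge> real j0 * real \<beta> + B - real_of_int t * real \<alpha>"
    using assms(6) Infr Mr ir by (simp add: algebra_simps)
  have "real_of_int t * real \<alpha> \<le> real \<beta> * real \<alpha>" using tr t0r by (intro mult_right_mono) auto
  also have "\<dots> \<le> real \<beta> ^ 2 * real \<alpha>"
    using assms(2) by (intro mult_right_mono) (auto simp: power2_eq_square)
  finally have A1: "real_of_int t * real \<alpha> \<le> real \<beta> ^ 2 * real \<alpha>" .
  have "a * real \<beta> * real_of_int t \<le> a * real \<beta> * real \<beta>"
    using tr assms(3) by (intro mult_left_mono) auto
  also have "\<dots> \<le> real \<beta> ^ 2 * (a * (1 + real \<beta>))"
    using assms(3) by (simp add: power2_eq_square algebra_simps)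
  finally have A2: "a * real \<beta> * real_of_int t \<le> real \<beta> ^ 2 * (a * (1 + real \<beta>))" .
  have "B \<ge> real_of_int t * real \<alpha> + a * real \<beta> * real_of_int t"
    using assms(4) A1 A2 by (simp add: algebra_simps)
  with key have "real_of_int q * real \<beta> \<ge> (real j0 + a * real_of_int t) * real \<beta>"
    by (simp add: algebra_simps)
  hence qge: "real_of_int q \<ge> real j0 + a * real_of_int t" using assms(2) by simp
  have "0 \<le> real j0 + a * real_of_int t" using assms(3) t0r by simp
  with qge have "0 \<le> real_of_int q" by linarith
  hence q0: "q \<ge> 0" by simp
  have qgt: "real (nat q) > a * real i + b" using qge j0 ir q0 by (simp add: algebra_simps)
  have "M \<in> Sset \<alpha> \<beta> a b i" unfolding Sset_def
  proof (intro CollectI exI conjI)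
    show "M = int i * int \<alpha> + int (nat q) * int \<beta>" using Mq q0 by simp
  qed (rule qgt)
  moreover have "i < n + \<beta> * (\<beta> + 1)"
  proof -
    have "nat t < \<beta>" using tb t0 by linarith
    also have "\<beta> \<le> \<beta> * (\<beta> + 1)" by simp
    finally show ?thesis unfolding i_def by simp
  qed
  ultimately show ?thesis by (intro exI[of _ i]) (simp add: i_def)
qed

end
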